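(* Let $r,p$ be positive integers with $p$ prime, and let $k$ be the largest integer such that $p>2k^2r^2$. Then there exists a set $S\subseteq\{0,\dots,p-1\}$ of size at least $k$ that does not contain an $r$-weighted arithmetic progression modulo $p$.
   Context: A set $S$ of non-negative integers contains no $r$-weighted arithmetic progression modulo $p$ if there do not exist pairwise distinct $s_1,s_2,s_3\in S$ and integers $0<x,y<r-1$ with $x+y<r$ such that $xs_1+ys_2\equiv(x+y)s_3\pmod p$. *)

theory Defs
  imports Main "HOL-Number_Theory.Cong"
begin

definition no_weighted_AP :: "nat \<Rightarrow> nat \<Rightarrow> nat set \<Rightarrow> bool" where
  "no_weighted_AP r p S \<longleftrightarrow>
     \<not> (\<exists>s1\<in>S. \<exists>s2\<in>S. \<exists>s3\<in>S. \<exists>x y :: int.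
          s1 \<noteq> s2 \<and> s1 \<noteq> s3 \<and> s2 \<noteq> s3 \<and>
          0 < x \<and> x < int r - 1 \<and> 0 < y \<and> y < int r - 1 \<and> x + y < int r \<and>
          [x * int s1 + y * int s2 = (x + y) * int s3] (mod int p))"

end

theory Submission
  imports Defs "HOL-Computational_Algebra.Primes"
begin

definition sol :: "nat \<Rightarrow> int \<Rightarrow> int \<Rightarrow> nat" where
  "sol p a b = (SOME s. s < p \<and> int p dvd (a * int s - b))"

lemma sol_unique:
  assumes "prime p" "0 < a" "a < int p" "s < p" "int p dvd (a * int s - b)"
  shows "sol p a b = s"
proof -
  have "\<exists>t. t < p \<and> int p dvd (a * int t - b)" using assms by blast
  then have t: "sol p a b < p" "int p dvd (a * int (sol p a b) - b)"
    unfolding sol_def by (metis (mono_tags, lifting) someI_ex)+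
  define t where "t = sol p a b"
  have "int p dvd (a * int s - b) - (a * int t - b)" using dvd_diff[OF assms(5) t(2)] t_def by simp
  then have "int p dvd a * (int s - int t)" by (simp add: algebra_simps)
  moreover have pr: "prime (int p)" using assms by simp
  ultimately have "int p dvd a \<or> int p dvd (int s - int t)" using prime_dvd_mult_iff by blast
  moreover have "\<not> int p dvd a" using assms zdvd_not_zless by blast
  ultimately have d: "int p dvd (int s - int t)" by blast
  show ?thesis
  proof (rule ccontr)
    assume "sol p a b \<noteq> s"
    then have "int s - int t \<noteq> 0" using t_def by simp
    then have "\<bar>int p\<bar> \<le> \<bar>int s - int t\<bar>" using d dvd_imp_le_int by blast
    then show False using t t_def assms by linarith
  qed
qed

lemma step:
  assumes pr: "prime p" and fin: "finite S" and sub: "S \<subseteq> {0..<p}"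
    and ap: "no_weighted_AP r p S"
    and bd: "card S * card S * r * r * 2 + card S < p"
  shows "\<exists>s. s < p \<and> s \<notin> S \<and> no_weighted_AP r p (insert s S)"
proof -
  define X where "X = {1..<int r - 1}"
  define F1 where "F1 = {s. s < p \<and> (\<exists>u\<in>S. \<exists>v\<in>S. \<exists>x\<in>X. \<exists>y\<in>X. x + y < int r \<and>
       int p dvd (x * int s - ((x + y) * int v - y * int u)))}"
  define F2 where "F2 = {s. s < p \<and> (\<exists>u\<in>S. \<exists>v\<in>S. \<exists>x\<in>X. \<exists>y\<in>X. x + y < int r \<and>
       int p dvd ((x + y) * int s - (x * int u + y * int v)))}"
  have rp: "int r \<le> int p" if "u \<in> S" for u
  proof -
    have "card S \<ge> 1" using that fin by (metis One_nat_def Suc_leI card_gt_0_iff empty_iff)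
    then have "1 * 1 * r * r * 1 \<le> card S * card S * r * r * 2"
      by (intro mult_le_mono) auto
    moreover have "r \<le> r * r" by (cases r) auto
    ultimately have "r \<le> card S * card S * r * r * 2" by linarith
    then show ?thesis using bd by linarith
  qed
  have "F1 \<subseteq> (\<lambda>(u,v,x,y). sol p x ((x + y) * int v - y * int u)) ` (S \<times> S \<times> X \<times> X)"
  proof
    fix s assume "s \<in> F1"
    then obtain u v x y where h: "s < p" "u\<in>S" "v\<in>S" "x\<in>X" "y\<in>X" "x + y < int r"
       "int p dvd (x * int s - ((x + y) * int v - y * int u))" unfolding F1_def by blast
    have "sol p x ((x + y) * int v - y * int u) = s"
      by (rule sol_unique) (use h pr rp[OF h(2)] X_def in auto)
    then show "s \<in> (\<lambda>(u,v,x,y). sol p x ((x + y) * int v - y * int u)) ` (S \<times> S \<times> X \<times> X)"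
      using h by force
  qed
  then have "card F1 \<le> card ((\<lambda>(u,v,x,y). sol p x ((x + y) * int v - y * int u)) ` (S \<times> S \<times> X \<times> X))"
    by (rule card_mono[rotated]) (simp add: fin X_def)
  also have "\<dots> \<le> card (S \<times> S \<times> X \<times> X)" by (rule card_image_le) (simp add: fin X_def)
  also have "\<dots> = card S * card S * card X * card X" by (simp add: card_cartesian_product)
  finally have c1: "card F1 \<le> card S * card S * card X * card X" .
  have "F2 \<subseteq> (\<lambda>(u,v,x,y). sol p (x + y) (x * int u + y * int v)) ` (S \<times> S \<times> X \<times> X)"
  proof
    fix s assume "s \<in> F2"
    then obtain u v x y where h: "s < p" "u\<in>S" "v\<in>S" "x\<in>X" "y\<in>X" "x + y < int r"
       "int p dvd ((x + y) * int s - (x * int u + y * int v))" unfolding F2_def by blast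
    have "sol p (x + y) (x * int u + y * int v) = s"
      by (rule sol_unique) (use h pr rp[OF h(2)] X_def in auto)
    then show "s \<in> (\<lambda>(u,v,x,y). sol p (x + y) (x * int u + y * int v)) ` (S \<times> S \<times> X \<times> X)"
      using h by force
  qed
  then have "card F2 \<le> card ((\<lambda>(u,v,x,y). sol p (x + y) (x * int u + y * int v)) ` (S \<times> S \<times> X \<times> X))"
    by (rule card_mono[rotated]) (simp add: fin X_def)
  also have "\<dots> \<le> card (S \<times> S \<times> X \<times> X)" by (rule card_image_le) (simp add: fin X_def)
  also have "\<dots> = card S * card S * card X * card X" by (simp add: card_cartesian_product)
  finally have c2: "card F2 \<le> card S * card S * card X * card X" .
  have cX: "card X \<le> r" unfolding X_def by simp
  have "card X * card X \<le> r * r" using cX mult_le_mono by blast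
  then have "card S * card S * (card X * card X) \<le> card S * card S * (r * r)" by simp
  then have le: "card S * card S * card X * card X \<le> card S * card S * (r * r)" by (simp add: mult.assoc)
  have e: "card S * card S * r * r * 2 = 2 * (card S * card S * (r * r))" by (simp add: algebra_simps)
  have cc: "card (F1 \<union> F2 \<union> S) < p"
    using c1 c2 bd card_Un_le[of "F1 \<union> F2" S] card_Un_le[of F1 F2] le e
    by linarith
  have "\<not> {0..<p} \<subseteq> F1 \<union> F2 \<union> S"
  proof
    assume "{0..<p} \<subseteq> F1 \<union> F2 \<union> S"
    then have "card {0..<p} \<le> card (F1 \<union> F2 \<union> S)"
      by (intro card_mono) (auto simp: F1_def F2_def fin)
    then show False using cc by simp
  qed
  then obtain s where s0: "s \<in> {0..<p}" "s \<notin> F1 \<union> F2 \<union> S" by blast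
  then have s: "s < p" "s \<notin> F1" "s \<notin> F2" "s \<notin> S" by simp_all
  have "no_weighted_AP r p (insert s S)"
    unfolding no_weighted_AP_def
  proof
    assume "\<exists>s1\<in>insert s S. \<exists>s2\<in>insert s S. \<exists>s3\<in>insert s S. \<exists>x y :: int.
          s1 \<noteq> s2 \<and> s1 \<noteq> s3 \<and> s2 \<noteq> s3 \<and>
          0 < x \<and> x < int r - 1 \<and> 0 < y \<and> y < int r - 1 \<and> x + y < int r \<and>
          [x * int s1 + y * int s2 = (x + y) * int s3] (mod int p)"
    then obtain s1 s2 s3 x y where h: "s1 \<in> insert s S" "s2 \<in> insert s S" "s3 \<in> insert s S"
      "s1 \<noteq> s2" "s1 \<noteq> s3" "s2 \<noteq> s3" "0 < x" "x < int r - 1" "0 < y" "y < int r - 1" "x + y < int r"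
      and c0: "[x * int s1 + y * int s2 = (x + y) * int s3] (mod int p)"
      by blast
    have c: "int p dvd (x * int s1 + y * int s2 - (x + y) * int s3)"
      using c0 by (simp add: cong_iff_dvd_diff)
    have xX: "x \<in> X" "y \<in> X" using h X_def by auto
    consider "s1 \<in> S" "s2 \<in> S" "s3 \<in> S" | "s1 = s" "s2 \<in> S" "s3 \<in> S"
      | "s2 = s" "s1 \<in> S" "s3 \<in> S" | "s3 = s" "s1 \<in> S" "s2 \<in> S"
      using h by auto
    then show False
    proof cases
      case 1
      then show ?thesis using ap h c unfolding no_weighted_AP_def cong_iff_dvd_diff by blast
    next
      case 2
      have eq: "x * int s - ((x + y) * int s3 - y * int s2) = x * int s1 + y * int s2 - (x + y) * int s3"
        using 2 by (simp add: algebra_simps)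
      have "int p dvd (x * int s - ((x + y) * int s3 - y * int s2))" unfolding eq by (rule c)
      then have "s \<in> F1" unfolding F1_def using s(1) 2(2,3) xX h(11) by blast
      then show ?thesis using s by blast
    next
      case 3
      have eq: "y * int s - ((y + x) * int s3 - x * int s1) = x * int s1 + y * int s2 - (x + y) * int s3"
        using 3 by (simp add: algebra_simps)
      have "int p dvd (y * int s - ((y + x) * int s3 - x * int s1))" unfolding eq by (rule c)
      moreover have "y + x < int r" using h by simp
      ultimately have "s \<in> F1" unfolding F1_def using s(1) 3(2,3) xX by blast
      then show ?thesis using s by blast
    next
      case 4
      have eq: "(x + y) * int s - (x * int s1 + y * int s2) = - (x * int s1 + y * int s2 - (x + y) * int s3)"
        using 4 by (simp add: algebra_simps)
      have "int p dvd ((x + y) * int s - (x * int s1 + y * int s2))" unfolding eq using dvd_minus_iff c by blast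
      then have "s \<in> F2" unfolding F2_def using s(1) 4(2,3) xX h(11) by blast
      then show ?thesis using s by blast
    qed
  qed
  then show ?thesis using s by blast
qed

lemma build:
  assumes pr: "prime p" and r: "r > 0" and kp: "2 * k^2 * r^2 < p"
  shows "n \<le> k \<Longrightarrow> \<exists>S. S \<subseteq> {0..<p} \<and> finite S \<and> card S = n \<and> no_weighted_AP r p S"
proof (induction n)
  case 0
  show ?case by (rule exI[of _ "{}"]) (simp add: no_weighted_AP_def)
next
  case (Suc n)
  then obtain S where S: "S \<subseteq> {0..<p}" "finite S" "card S = n" "no_weighted_AP r p S" by auto
  have "(n+1)^2 \<le> k^2" using Suc.prems by (simp add: power_mono)
  then have "2 * (n+1)^2 * r^2 \<le> 2 * k^2 * r^2" by simp
  moreover have "n * n * r * r * 2 + n \<le> 2 * (n+1)^2 * r^2"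
  proof -
    have "1 \<le> r * r" using r by (simp add: Suc_leI)
    then have "n \<le> n * (r * r)" by simp
    moreover have "n * (r * r) \<le> n * (r * (r * 4))" by simp
    ultimately have "n \<le> n * (r * (r * 4))" by linarith
    moreover have "2 * (n+1)^2 * r^2 = n * n * r * r * 2 + r * (r * 2) + n * (r * (r * 4))"
      by (simp add: power2_eq_square algebra_simps)
    ultimately show ?thesis by linarith
  qed
  ultimately have "card S * card S * r * r * 2 + card S < p" unfolding S(3) using kp by linarith
  then obtain s where s: "s < p" "s \<notin> S" "no_weighted_AP r p (insert s S)"
    using step[OF pr S(2) S(1) S(4)] by blast
  show ?case using s S by (intro exI[of _ "insert s S"]) auto
qed

theorem theorem10:
  fixes r p k :: nat
  assumes "r > 0" and "prime p"
    and "p > 2 * k^2 * r^2"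
    and "\<not> (p > 2 * (k + 1)^2 * r^2)"
  shows "\<exists>S. S \<subseteq> {0..<p} \<and> card S \<ge> k \<and> no_weighted_AP r p S"
  using build[OF assms(2) assms(1) assms(3), of k] by auto

end
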